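(* For every $n\ge1$, $$1-\omega^n=-\prod_{d\mid n}C_{3d}(\lambda)\prod_{\substack{d\mid n\\ 3\nmid d}}C_d(\lambda),$$ where $C_d(x)$ denotes the $d$-th cyclotomic polynomial.
   Context: $\lambda$ is the real root of $x^3+x^2+x-1$ and $\omega=\lambda^3$. Products run over positive divisors $d$ of $n$. *)

theory Defs
  imports "HOL-Analysis.Analysis" "HOL-Computational_Algebra.Polynomial"
begin

definition cyclotomic :: "nat \<Rightarrow> complex poly" where
  "cyclotomic d = (\<Prod>k\<in>{k. 1 \<le> k \<and> k \<le> d \<and> coprime k d}.
      [:- cis (2 * pi * real k / real d), 1:])"

end

theory Submission
  imports Defs "HOL-Computational_Algebra.Fundamental_Theorem_Algebra"
begin


lemma roots_prod:
  fixes m :: nat and x :: complex assumes "m > 0"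
  shows "x ^ m - 1 = (\<Prod>k<m. x - cis (2 * pi * real k / real m))"
proof -
  define p :: "complex poly" where "p = monom 1 m - 1"
  have pd: "pderiv p = smult (of_nat m) (monom 1 (m - 1))"
    unfolding p_def by (simp add: pderiv_diff pderiv_monom smult_monom)
  have pz: "poly p z = z ^ m - 1" for z by (simp add: p_def poly_monom)
  have "rsquarefree p"
    unfolding rsquarefree_roots
  proof (intro allI notI)
    fix a assume "poly p a = 0 \<and> poly (pderiv p) a = 0"
    then have "a ^ m = 1" "of_nat m * a ^ (m - 1) = 0" by (auto simp: pz pd poly_monom)
    then show False using assms by (auto simp: power_0_left)
  qed
  moreover have "lead_coeff p = 1"
  proof -
    have "lead_coeff (-1 + monom 1 m) = lead_coeff (monom 1 m :: complex poly)"
      by (rule lead_coeff_add_le) (use assms in \<open>simp add: degree_monom_eq\<close>)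
    moreover have "p = -1 + monom 1 m" unfolding p_def by simp
    ultimately show ?thesis by (simp add: degree_monom_eq)
  qed
  ultimately have "(\<Prod>z|poly p z = 0. [:-z, 1:]) = p"
    using complex_poly_decompose_rsquarefree[of p] by simp
  then have "poly p x = poly (\<Prod>z|poly p z = 0. [:-z, 1:]) x" by simp
  also have "\<dots> = (\<Prod>z|poly p z = 0. x - z)" by (simp add: poly_prod)
  also have "{z. poly p z = 0} = {z. z ^ m = 1}" by (simp add: pz)
  finally have "poly p x = (\<Prod>z|z ^ m = 1. x - z)" .
  also have "\<dots> = (\<Prod>k<m. x - cis (2 * pi * real k / real m))"
    by (rule prod.reindex_bij_betw[OF Complex.bij_betw_roots_unity[OF assms], symmetric])
  finally show ?thesis by (simp add: pz)
qed


lemma bij_div: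
  fixes m :: nat assumes m: "m > 0"
  shows "bij_betw (\<lambda>j. (m div gcd j m, j div gcd j m)) {1..m}
     (SIGMA d:{d. d dvd m}. {k. 1 \<le> k \<and> k \<le> d \<and> coprime k d})"
proof (rule bij_betw_byWitness[where f' = "\<lambda>(d, k). k * (m div d)"])
  show "\<forall>a\<in>{1..m}. (\<lambda>(d, k). k * (m div d)) (m div gcd a m, a div gcd a m) = a"
  proof
    fix j assume j: "j \<in> {1..m}"
    have g: "gcd j m dvd m" "gcd j m dvd j" "gcd j m > 0" using m by auto
    obtain c where c: "m = gcd j m * c" using g(1) by blast
    have c0: "c > 0" using c m by (cases c) auto
    have "m div gcd j m = c" using g(3) by (metis c nonzero_mult_div_cancel_left less_not_refl2)
    moreover have "m div c = gcd j m" using c0 by (metis c nonzero_mult_div_cancel_right less_not_refl2)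
    ultimately have "m div (m div gcd j m) = gcd j m" by simp
    then show "(\<lambda>(d, k). k * (m div d)) (m div gcd j m, j div gcd j m) = j"
      using g by simp
  qed
  show "\<forall>a'\<in>(SIGMA d:{d. d dvd m}. {k. 1 \<le> k \<and> k \<le> d \<and> coprime k d}).
      (\<lambda>j. (m div gcd j m, j div gcd j m)) ((\<lambda>(d, k). k * (m div d)) a') = a'"
  proof
    fix a' assume "a' \<in> (SIGMA d:{d. d dvd m}. {k. 1 \<le> k \<and> k \<le> d \<and> coprime k d})"
    then obtain d k where a': "a' = (d, k)" "d dvd m" "1 \<le> k" "k \<le> d" "coprime k d" by auto
    obtain e where e: "m = d * e" using a' by auto
    have e0: "e > 0" using m e by auto
    have md: "m div d = e" using e a' by auto
    have "gcd (k * e) m = e * gcd k d" unfolding e using gcd_mult_right[of k e d] by (simp add: mult.commute gcd.commute)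
    then have "gcd (k * e) m = e" using a' by simp
    then show "(\<lambda>j. (m div gcd j m, j div gcd j m)) ((\<lambda>(d, k). k * (m div d)) a') = a'"
      using a' md e e0 by simp
  qed
  show "(\<lambda>j. (m div gcd j m, j div gcd j m)) ` {1..m}
      \<subseteq> (SIGMA d:{d. d dvd m}. {k. 1 \<le> k \<and> k \<le> d \<and> coprime k d})"
  proof
    fix y assume "y \<in> (\<lambda>j. (m div gcd j m, j div gcd j m)) ` {1..m}"
    then obtain j where j: "1 \<le> j" "j \<le> m" "y = (m div gcd j m, j div gcd j m)" by auto
    have g: "gcd j m dvd m" "gcd j m dvd j" "gcd j m > 0" using m by auto
    obtain c where c: "m = gcd j m * c" using g(1) by blast
    obtain c' where c': "j = gcd j m * c'" using g(2) by blast
    have "m div gcd j m = c" using g(3) by (metis c nonzero_mult_div_cancel_left less_not_refl2)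
    then have "m div gcd j m dvd m" by (metis c dvd_triv_right)
    moreover have "1 \<le> j div gcd j m"
    proof -
      have "j div gcd j m = c'" using g(3) by (metis c' nonzero_mult_div_cancel_left less_not_refl2)
      moreover have "c' \<noteq> 0" using c' j by (metis mult_0_right not_one_le_zero)
      ultimately show ?thesis by simp
    qed
    moreover have "j div gcd j m \<le> m div gcd j m" using j by (simp add: div_le_mono)
    moreover have "coprime (j div gcd j m) (m div gcd j m)" using g by (intro div_gcd_coprime) auto
    ultimately show "y \<in> (SIGMA d:{d. d dvd m}. {k. 1 \<le> k \<and> k \<le> d \<and> coprime k d})"
      using j by auto
  qed
  show "(\<lambda>(d, k). k * (m div d)) ` (SIGMA d:{d. d dvd m}. {k. 1 \<le> k \<and> k \<le> d \<and> coprime k d}) \<subseteq> {1..m}"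
  proof
    fix y assume "y \<in> (\<lambda>(d, k). k * (m div d)) ` (SIGMA d:{d. d dvd m}. {k. 1 \<le> k \<and> k \<le> d \<and> coprime k d})"
    then obtain d k where a': "y = k * (m div d)" "d dvd m" "1 \<le> k" "k \<le> d" by auto
    obtain e where e: "m = d * e" using a' by auto
    have e0: "e > 0" using m e by auto
    have d0: "d > 0" using m e by (cases d) auto
    have md: "m div d = e" using e d0 by auto
    have "k * e \<le> d * e" using a' by simp
    moreover have "0 < k * e" using a'(3) e0 by simp
    moreover have "y = k * e" using a'(1) md by simp
    ultimately show "y \<in> {1..m}" using e by simp
  qed
qed

lemma cyc_prod:
  fixes m :: nat and x :: complex assumes m: "m > 0"
  shows "(\<Prod>d\<in>{d. d dvd m}. poly (cyclotomic d) x) = x ^ m - 1"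
proof -
  define h where "h = (\<lambda>j::nat. x - cis (2 * pi * real j / real m))"
  have fin: "finite {d. d dvd m}" using m by simp
  have "(\<Prod>d\<in>{d. d dvd m}. poly (cyclotomic d) x)
      = (\<Prod>d\<in>{d. d dvd m}. \<Prod>k\<in>{k. 1 \<le> k \<and> k \<le> d \<and> coprime k d}. x - cis (2 * pi * real k / real d))"
    unfolding cyclotomic_def by (simp add: poly_prod)
  also have "\<dots> = (\<Prod>(d,k)\<in>(SIGMA d:{d. d dvd m}. {k. 1 \<le> k \<and> k \<le> d \<and> coprime k d}). x - cis (2 * pi * real k / real d))"
    using fin by (intro prod.Sigma) auto
  also have "\<dots> = (\<Prod>j\<in>{1..m}. (\<lambda>(d,k). x - cis (2 * pi * real k / real d)) (m div gcd j m, j div gcd j m))"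
    by (rule prod.reindex_bij_betw[OF bij_div[OF m], symmetric])
  also have "\<dots> = (\<Prod>j\<in>{1..m}. h j)"
  proof (rule prod.cong[OF refl])
    fix j assume j: "j \<in> {1..m}"
    define g where "g = gcd j m"
    have g: "g dvd m" "g dvd j" "g > 0" using m by (auto simp: g_def)
    have "real (j div g) / real (m div g) = real j / real m"
      using g by (simp add: real_of_nat_div field_simps)
    then have "2 * pi * real (j div g) / real (m div g) = 2 * pi * real j / real m"
      by (metis times_divide_eq_right)
    then show "(\<lambda>(d,k). x - cis (2 * pi * real k / real d)) (m div gcd j m, j div gcd j m) = h j"
      by (simp add: h_def g_def)
  qed
  also have "\<dots> = (\<Prod>j<m. h j)"
  proof -
    have "h m = h 0" using m by (simp add: h_def)
    have a: "{1..m} = insert m {1..<m}" "{..<m} = insert 0 {1..<m}" using m by auto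
    show ?thesis unfolding a using \<open>h m = h 0\<close> by simp
  qed
  also have "\<dots> = x ^ m - 1" unfolding h_def by (rule roots_prod[OF m, symmetric])
  finally show ?thesis .
qed

theorem mainTheorem6:
  fixes lam :: real and n :: nat
  assumes lam_root: "lam ^ 3 + lam ^ 2 + lam - 1 = 0"
    and n_pos: "n \<ge> 1"
  shows "complex_of_real (1 - (lam ^ 3) ^ n) =
    - ((\<Prod>d\<in>{d. d dvd n}. poly (cyclotomic (3 * d)) (complex_of_real lam)) *
       (\<Prod>d\<in>{d. d dvd n \<and> \<not> 3 dvd d}. poly (cyclotomic d) (complex_of_real lam)))"
proof -
  have n0: "n > 0" using n_pos by simp
  define x where "x = complex_of_real lam"
  define P where "P = (\<lambda>d. poly (cyclotomic d) x)"
  have fin: "finite {d. d dvd n}" using n0 by simp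
  have un: "{e. e dvd 3 * n} = (\<lambda>d. 3 * d) ` {d. d dvd n} \<union> {d. d dvd n \<and> \<not> 3 dvd d}"
  proof (intro set_eqI iffI)
    fix e assume "e \<in> {e. e dvd 3 * n}"
    then have e: "e dvd 3 * n" by simp
    show "e \<in> (\<lambda>d. 3 * d) ` {d. d dvd n} \<union> {d. d dvd n \<and> \<not> 3 dvd d}"
    proof (cases "3 dvd e")
      case True
      then obtain d where "e = 3 * d" by auto
      then show ?thesis using e by auto
    next
      case False
      then have "coprime 3 e" by (intro prime_imp_coprime) auto
      then have "coprime e 3" by (simp add: coprime_commute)
      then have "e dvd n" using e by (metis coprime_dvd_mult_right_iff)
      then show ?thesis using False by auto
    qed
  qed auto
  have "(\<Prod>e\<in>{e. e dvd 3 * n}. P e) = x ^ (3 * n) - 1"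
    unfolding P_def by (rule cyc_prod) (use n0 in simp)
  moreover have "(\<Prod>e\<in>{e. e dvd 3 * n}. P e)
     = (\<Prod>d\<in>{d. d dvd n}. P (3 * d)) * (\<Prod>d\<in>{d. d dvd n \<and> \<not> 3 dvd d}. P d)"
  proof -
    have "(\<Prod>e\<in>{e. e dvd 3 * n}. P e) = (\<Prod>e\<in>(\<lambda>d. 3 * d) ` {d. d dvd n}. P e) * (\<Prod>d\<in>{d. d dvd n \<and> \<not> 3 dvd d}. P d)"
      unfolding un using fin by (intro prod.union_disjoint) auto
    also have "(\<Prod>e\<in>(\<lambda>d. 3 * d) ` {d. d dvd n}. P e) = (\<Prod>d\<in>{d. d dvd n}. P (3 * d))"
      by (subst prod.reindex) (auto simp: inj_on_def)
    finally show ?thesis .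
  qed
  ultimately have "(\<Prod>d\<in>{d. d dvd n}. P (3 * d)) * (\<Prod>d\<in>{d. d dvd n \<and> \<not> 3 dvd d}. P d) = x ^ (3 * n) - 1"
    by simp
  moreover have "complex_of_real (1 - (lam ^ 3) ^ n) = - (x ^ (3 * n) - 1)"
    by (simp add: x_def power_mult)
  ultimately show ?thesis unfolding P_def x_def by simp
qed

end
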